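(* Let $\mathcal{A}=(\mathbb{G}_a^m,\Phi)$ be a $T$-module defined over a field $\mathcal{F}\subset\overline{k}$ such that there exists a positive integer $i$ for which the leading coefficient matrix of $\Phi(T^i)\in\mathcal{F}^{m,m}\{\tau\}$ is invertible. Then $\mathcal{A}$ is abelian.
   Context: $A=\mathbb{F}_q[T]$, $k=\mathbb{F}_q(T)$, $\tau$ the Frobenius $z\mapsto z^q$, and $\mathcal{F}^{m,m}\{\tau\}$ the twisted polynomial ring with $\tau M=M^{(q)}\tau$ (entrywise $q$-th power). A $T$-module of dimension $m$ over $\mathcal{F}$ is $\mathcal{A}=(\mathbb{G}_a^m,\Phi)$ with $\Phi:A\to\mathcal{F}^{m,m}\{\tau\}$ an $\mathbb{F}_q$-algebra homomorphism, $\Phi(T)=\sum_{i=0}^{\tilde d}a_i\tau^i$, $a_{\tilde d}\ne0$, $a_0=TI_m+N$ with $N$ nilpotent. $\mathrm{Hom}_{\mathcal{F}}(\mathcal{A},\mathbb{G}_a)$ denotes the $\mathbb{F}_q$-linear algebraic group homomorphisms $\mathbb{G}_a^m\to\mathbb{G}_a$ defined over $\mathcal{F}$, identified with $\mathcal{F}\{\tau\}^m$ (row vectors), made into an $\mathcal{F}[T]$-module by letting $\mathcal{F}$ act by left multiplication and $T\cdot f=f\circ\Phi(T)$. $\mathcal{A}$ is abelian if this $\mathcal{F}[T]$-module has finite rank. *)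

theory Defs
  imports "HOL-Computational_Algebra.Polynomial"
begin

(* Ambient field 'a plays the role of an algebraic closure of k = F_q(T);
   theta :: 'a is the image of T.  m x m matrices are functions
   nat => nat => 'a (only indices < m are relevant).  A twisted polynomial
   P in F^{m,m}{tau} is a function nat => nat => nat => 'a, P n r c being
   entry (r,c) of the coefficient of tau^n.  Row vectors in F{tau}^m are
   functions nat => nat => 'a, f n c being the coefficient of tau^n in
   component c. *)

definition Fq :: "nat \<Rightarrow> 'a::field set" where
  "Fq q = {x. x ^ q = x}"

definition is_subfield :: "'a::field set \<Rightarrow> bool" where
  "is_subfield F \<longleftrightarrow> 0 \<in> F \<and> 1 \<in> F \<and>
     (\<forall>x\<in>F. \<forall>y\<in>F. x + y \<in> F \<and> x * y \<in> F) \<and>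
     (\<forall>x\<in>F. - x \<in> F \<and> inverse x \<in> F)"

definition kfield :: "nat \<Rightarrow> 'a::field \<Rightarrow> 'a set" where
  "kfield q theta = {poly a theta / poly b theta | a b.
      (\<forall>i. coeff a i \<in> Fq q) \<and> (\<forall>i. coeff b i \<in> Fq q) \<and> poly b theta \<noteq> 0}"

definition algebraic_over :: "'a::field set \<Rightarrow> 'a \<Rightarrow> bool" where
  "algebraic_over K x \<longleftrightarrow> (\<exists>g. g \<noteq> 0 \<and> (\<forall>i. coeff g i \<in> K) \<and> poly g x = 0)"

definition good_setting :: "nat \<Rightarrow> 'a::field \<Rightarrow> bool" where
  "good_setting q theta \<longleftrightarrow> prime CHAR('a) \<and> (\<exists>e>0. q = CHAR('a) ^ e) \<and>
     finite (Fq q :: 'a set) \<and> card (Fq q :: 'a set) = q \<and>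
     (\<forall>g. g \<noteq> 0 \<and> (\<forall>i. coeff g i \<in> Fq q) \<longrightarrow> poly g theta \<noteq> 0)"

definition intermediate_field :: "nat \<Rightarrow> 'a::field \<Rightarrow> 'a set \<Rightarrow> bool" where
  "intermediate_field q theta F \<longleftrightarrow> is_subfield F \<and> kfield q theta \<subseteq> F \<and>
     (\<forall>x\<in>F. algebraic_over (kfield q theta) x)"

definition mat_mult :: "nat \<Rightarrow> (nat \<Rightarrow> nat \<Rightarrow> 'a::comm_ring_1) \<Rightarrow> (nat \<Rightarrow> nat \<Rightarrow> 'a) \<Rightarrow> nat \<Rightarrow> nat \<Rightarrow> 'a" where
  "mat_mult m A B = (\<lambda>r c. \<Sum>l<m. A r l * B l c)"

definition mat_id :: "nat \<Rightarrow> nat \<Rightarrow> nat \<Rightarrow> 'a::comm_ring_1" where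
  "mat_id m = (\<lambda>r c. if r = c \<and> r < m then 1 else 0)"

fun mat_pow :: "nat \<Rightarrow> (nat \<Rightarrow> nat \<Rightarrow> 'a::comm_ring_1) \<Rightarrow> nat \<Rightarrow> nat \<Rightarrow> nat \<Rightarrow> 'a" where
  "mat_pow m A 0 = mat_id m"
| "mat_pow m A (Suc k) = mat_mult m A (mat_pow m A k)"

definition mat_eq :: "nat \<Rightarrow> (nat \<Rightarrow> nat \<Rightarrow> 'a) \<Rightarrow> (nat \<Rightarrow> nat \<Rightarrow> 'a) \<Rightarrow> bool" where
  "mat_eq m A B \<longleftrightarrow> (\<forall>r<m. \<forall>c<m. A r c = B r c)"

definition mat_invertible :: "nat \<Rightarrow> (nat \<Rightarrow> nat \<Rightarrow> 'a::comm_ring_1) \<Rightarrow> bool" where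
  "mat_invertible m A \<longleftrightarrow> (\<exists>B. mat_eq m (mat_mult m A B) (mat_id m) \<and>
                                   mat_eq m (mat_mult m B A) (mat_id m))"

definition mat_nilpotent :: "nat \<Rightarrow> (nat \<Rightarrow> nat \<Rightarrow> 'a::comm_ring_1) \<Rightarrow> bool" where
  "mat_nilpotent m N \<longleftrightarrow> (\<exists>k. mat_eq m (mat_pow m N k) (\<lambda>_ _. 0))"

(* twisted matrix polynomials: tau M = M^(q) tau *)
definition tmul :: "nat \<Rightarrow> nat \<Rightarrow> (nat \<Rightarrow> nat \<Rightarrow> nat \<Rightarrow> 'a::comm_ring_1) \<Rightarrow> (nat \<Rightarrow> nat \<Rightarrow> nat \<Rightarrow> 'a) \<Rightarrow> nat \<Rightarrow> nat \<Rightarrow> nat \<Rightarrow> 'a" where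
  "tmul q m P Q = (\<lambda>n r c. \<Sum>j\<le>n. \<Sum>l<m. P j r l * (Q (n - j) l c) ^ (q ^ j))"

definition tone :: "nat \<Rightarrow> nat \<Rightarrow> nat \<Rightarrow> nat \<Rightarrow> 'a::comm_ring_1" where
  "tone m = (\<lambda>n r c. if n = 0 \<and> r = c \<and> r < m then 1 else 0)"

fun tpow :: "nat \<Rightarrow> nat \<Rightarrow> (nat \<Rightarrow> nat \<Rightarrow> nat \<Rightarrow> 'a::comm_ring_1) \<Rightarrow> nat \<Rightarrow> nat \<Rightarrow> nat \<Rightarrow> nat \<Rightarrow> 'a" where
  "tpow q m P 0 = tone m"
| "tpow q m P (Suc i) = tmul q m P (tpow q m P i)"

definition tdeg :: "nat \<Rightarrow> (nat \<Rightarrow> nat \<Rightarrow> nat \<Rightarrow> 'a::zero) \<Rightarrow> nat" where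
  "tdeg m P = (GREATEST n. \<exists>r<m. \<exists>c<m. P n r c \<noteq> 0)"

definition tlead :: "nat \<Rightarrow> (nat \<Rightarrow> nat \<Rightarrow> nat \<Rightarrow> 'a::zero) \<Rightarrow> nat \<Rightarrow> nat \<Rightarrow> 'a" where
  "tlead m P = P (tdeg m P)"

definition is_T_module :: "nat \<Rightarrow> 'a::field \<Rightarrow> 'a set \<Rightarrow> nat \<Rightarrow> (nat \<Rightarrow> nat \<Rightarrow> nat \<Rightarrow> 'a) \<Rightarrow> bool" where
  "is_T_module q theta F m Phi_T \<longleftrightarrow> m > 0 \<and>
     (\<forall>n r c. Phi_T n r c \<in> F) \<and>
     (\<forall>n r c. (r \<ge> m \<or> c \<ge> m) \<longrightarrow> Phi_T n r c = 0) \<and>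
     (\<exists>d. (\<forall>n>d. \<forall>r c. Phi_T n r c = 0) \<and> (\<exists>r<m. \<exists>c<m. Phi_T d r c \<noteq> 0)) \<and>
     mat_nilpotent m (\<lambda>r c. Phi_T 0 r c - theta * mat_id m r c)"

(* Hom_F(A, G_a) = F{tau}^m (row vectors) *)
definition Hom :: "'a::field set \<Rightarrow> nat \<Rightarrow> (nat \<Rightarrow> nat \<Rightarrow> 'a) set" where
  "Hom F m = {f. (\<forall>n c. f n c \<in> F) \<and> (\<forall>n c. c \<ge> m \<longrightarrow> f n c = 0) \<and>
                 (\<exists>D. \<forall>n>D. \<forall>c. f n c = 0)}"

definition tcomp :: "nat \<Rightarrow> nat \<Rightarrow> (nat \<Rightarrow> nat \<Rightarrow> 'a::comm_ring_1) \<Rightarrow> (nat \<Rightarrow> nat \<Rightarrow> nat \<Rightarrow> 'a) \<Rightarrow> nat \<Rightarrow> nat \<Rightarrow> 'a" where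
  "tcomp q m f M = (\<lambda>n c. \<Sum>j\<le>n. \<Sum>l<m. f j l * (M (n - j) l c) ^ (q ^ j))"

definition FT_act :: "nat \<Rightarrow> nat \<Rightarrow> (nat \<Rightarrow> nat \<Rightarrow> nat \<Rightarrow> 'a::field) \<Rightarrow> 'a poly \<Rightarrow> (nat \<Rightarrow> nat \<Rightarrow> 'a) \<Rightarrow> nat \<Rightarrow> nat \<Rightarrow> 'a" where
  "FT_act q m Phi_T a f = (\<lambda>n c. \<Sum>i\<le>degree a. coeff a i * tcomp q m f (tpow q m Phi_T i) n c)"

definition FT :: "'a::field set \<Rightarrow> 'a poly set" where
  "FT F = {a. \<forall>i. coeff a i \<in> F}"

(* the F[T]-module Hom_F(A,G_a) has finite rank, i.e. there is a finite subset S
   such that the quotient by the F[T]-span of S is torsion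
   (equivalently, dim over F(T) of Hom tensor F(T) is finite) *)
definition finite_rank :: "nat \<Rightarrow> 'a::field set \<Rightarrow> nat \<Rightarrow> (nat \<Rightarrow> nat \<Rightarrow> nat \<Rightarrow> 'a) \<Rightarrow> bool" where
  "finite_rank q F m Phi_T \<longleftrightarrow> (\<exists>S. finite S \<and> S \<subseteq> Hom F m \<and>
     (\<forall>f\<in>Hom F m. \<exists>a\<in>FT F. a \<noteq> 0 \<and> (\<exists>g. (\<forall>s\<in>S. g s \<in> FT F) \<and>
         FT_act q m Phi_T a f = (\<lambda>n c. \<Sum>s\<in>S. FT_act q m Phi_T (g s) s n c))))"

definition abelian :: "nat \<Rightarrow> 'a::field set \<Rightarrow> nat \<Rightarrow> (nat \<Rightarrow> nat \<Rightarrow> nat \<Rightarrow> 'a) \<Rightarrow> bool" where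
  "abelian q F m Phi_T \<longleftrightarrow> finite_rank q F m Phi_T"

end

theory Submission
  imports Defs "HOL-Computational_Algebra.Primes" "Jordan_Normal_Form.Determinant"
begin

definition frob_ok :: "'a::field itself \<Rightarrow> nat \<Rightarrow> bool" where
  "frob_ok _ q \<longleftrightarrow> prime CHAR('a) \<and> (\<exists>e. q = CHAR('a)^e)"

lemma frob_add:
  fixes x y :: "'a::field"
  assumes "frob_ok TYPE('a) q"
  shows "(x+y)^(q^j) = x^(q^j) + y^(q^j)"
proof -
  obtain e where p: "prime CHAR('a)" and e: "q = CHAR('a)^e" using assms unfolding frob_ok_def by blast
  have "q^j = CHAR('a)^(e*j)" using e by (simp add: power_mult)
  then show ?thesis using freshmans_dream'[OF p] by blast
qed

lemma frob_sum:
  fixes f :: "'b \<Rightarrow> 'a::field"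
  assumes "frob_ok TYPE('a) q"
  shows "(sum f A)^(q^j) = (\<Sum>x\<in>A. (f x)^(q^j))"
proof -
  obtain e where p: "prime CHAR('a)" and e: "q = CHAR('a)^e" using assms unfolding frob_ok_def by blast
  have "q^j = CHAR('a)^(e*j)" using e by (simp add: power_mult)
  then show ?thesis using freshmans_dream_sum'[OF p] by blast
qed

lemma frob_pow: "((x::'a::field)^(q^a))^(q^b) = x^(q^(a+b))"
  by (simp add: power_mult[symmetric] power_add)

lemma tri_sum:
  fixes G :: "nat \<Rightarrow> nat \<Rightarrow> 'b::comm_monoid_add"
  shows "(\<Sum>j\<le>n. \<Sum>a\<le>j. G a (j-a)) = (\<Sum>a\<le>n. \<Sum>b\<le>n-a. G a b)"
proof -
  have "(\<Sum>a\<le>n. \<Sum>b\<le>n-a. G a b) = sum (\<lambda>(a,b). G a b) (SIGMA a:{..n}. {..n-a})"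
    by (rule sum.Sigma) auto
  also have "(SIGMA a:{..n}. {..n-a}) = {(i,j). i+j \<le> n}" by auto
  also have "sum (\<lambda>(a,b). G a b) {(i,j). i+j \<le> n} = (\<Sum>j\<le>n. \<Sum>a\<le>j. G a (j-a))"
    by (rule sum.triangle_reindex_eq)
  finally show ?thesis by simp
qed

lemma tmul_assoc:
  fixes P Q R :: "nat \<Rightarrow> nat \<Rightarrow> nat \<Rightarrow> 'a::field"
  assumes fr: "frob_ok TYPE('a) q"
  shows "tmul q m (tmul q m P Q) R = tmul q m P (tmul q m Q R)"
proof (intro ext)
  fix n r c
  define G where "G = (\<lambda>a b. \<Sum>k<m. \<Sum>l<m. P a r k * (Q b k l)^(q^a) * (R (n-(a+b)) l c)^(q^(a+b)))"
  have "tmul q m (tmul q m P Q) R n r c = (\<Sum>j\<le>n. \<Sum>l<m. (\<Sum>a\<le>j. \<Sum>k<m. P a r k * (Q (j-a) k l)^(q^a)) * (R (n-j) l c)^(q^j))"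
    unfolding tmul_def by simp
  also have "\<dots> = (\<Sum>j\<le>n. \<Sum>a\<le>j. G a (j-a))"
  proof (rule sum.cong[OF refl])
    fix j assume j: "j \<in> {..n}"
    have "(\<Sum>l<m. (\<Sum>a\<le>j. \<Sum>k<m. P a r k * (Q (j-a) k l)^(q^a)) * (R (n-j) l c)^(q^j))
        = (\<Sum>l<m. \<Sum>a\<le>j. \<Sum>k<m. P a r k * (Q (j-a) k l)^(q^a) * (R (n-j) l c)^(q^j))"
      by (simp only: sum_distrib_right)
    also have "\<dots> = (\<Sum>a\<le>j. \<Sum>l<m. \<Sum>k<m. P a r k * (Q (j-a) k l)^(q^a) * (R (n-j) l c)^(q^j))"
      by (rule sum.swap)
    also have "\<dots> = (\<Sum>a\<le>j. \<Sum>k<m. \<Sum>l<m. P a r k * (Q (j-a) k l)^(q^a) * (R (n-j) l c)^(q^j))"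
      by (rule sum.cong[OF refl], rule sum.swap)
    also have "\<dots> = (\<Sum>a\<le>j. G a (j-a))"
      unfolding G_def by (rule sum.cong[OF refl]) auto
    finally show "(\<Sum>l<m. (\<Sum>a\<le>j. \<Sum>k<m. P a r k * (Q (j-a) k l)^(q^a)) * (R (n-j) l c)^(q^j)) = (\<Sum>a\<le>j. G a (j-a))" .
  qed
  also have "\<dots> = (\<Sum>a\<le>n. \<Sum>b\<le>n-a. G a b)" by (rule tri_sum)
  also have "\<dots> = tmul q m P (tmul q m Q R) n r c"
    unfolding tmul_def
  proof (rule sum.cong[OF refl])
    fix a assume a: "a \<in> {..n}"
    have "(\<Sum>b\<le>n-a. G a b) = (\<Sum>b\<le>n-a. \<Sum>k<m. \<Sum>l<m. P a r k * ((Q b k l) * (R (n - a - b) l c)^(q^b))^(q^a))"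
      unfolding G_def by (intro sum.cong refl) (simp add: power_mult_distrib frob_pow add.commute mult.assoc)
    also have "\<dots> = (\<Sum>k<m. \<Sum>b\<le>n-a. \<Sum>l<m. P a r k * ((Q b k l) * (R (n - a - b) l c)^(q^b))^(q^a))"
      by (rule sum.swap)
    also have "\<dots> = (\<Sum>k<m. P a r k * (\<Sum>b\<le>n-a. \<Sum>l<m. (Q b k l) * (R (n - a - b) l c)^(q^b))^(q^a))"
      by (simp add: frob_sum[OF fr] sum_distrib_left)
    finally show "(\<Sum>b\<le>n-a. G a b) = (\<Sum>l<m. P a r l * (\<Sum>j\<le>n - a. \<Sum>la<m. Q j l la * R (n - a - j) la c ^ q ^ j) ^ q ^ a)"
      by simp
  qed
  finally show "tmul q m (tmul q m P Q) R n r c = tmul q m P (tmul q m Q R) n r c" .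
qed


lemma frob_pos: "frob_ok TYPE('a::field) q \<Longrightarrow> q > 0"
  unfolding frob_ok_def by (auto intro: prime_gt_0_nat)

lemma zero_frob[simp]: "frob_ok TYPE('a::field) q \<Longrightarrow> (0::'a)^(q^j) = 0"
  using frob_pos by auto

lemma tcomp_as_tmul: "tcomp q m f M n c = tmul q m (\<lambda>j r l. f j l) M n r c"
  unfolding tcomp_def tmul_def by simp

lemma tcomp_tcomp:
  fixes f :: "nat \<Rightarrow> nat \<Rightarrow> 'a::field"
  assumes fr: "frob_ok TYPE('a) q"
  shows "tcomp q m (tcomp q m f A) B = tcomp q m f (tmul q m A B)"
proof -
  have lift: "(\<lambda>j r l. tcomp q m f A j l) = tmul q m (\<lambda>j r l. f j l) A"
    by (intro ext) (simp add: tcomp_as_tmul)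
  show ?thesis
  proof (intro ext)
    fix n c
    have "tcomp q m (tcomp q m f A) B n c = tmul q m (\<lambda>j r l. tcomp q m f A j l) B n 0 c"
      by (rule tcomp_as_tmul)
    also have "\<dots> = tmul q m (tmul q m (\<lambda>j r l. f j l) A) B n 0 c" using lift by simp
    also have "\<dots> = tcomp q m f (tmul q m A B) n c" unfolding tmul_assoc[OF fr] by (rule tcomp_as_tmul[symmetric])
    finally show "tcomp q m (tcomp q m f A) B n c = tcomp q m f (tmul q m A B) n c" .
  qed
qed

lemma tmul_tone_left:
  fixes Q :: "nat \<Rightarrow> nat \<Rightarrow> nat \<Rightarrow> 'a::field"
  assumes "\<And>n r c. r \<ge> m \<Longrightarrow> Q n r c = 0"
  shows "tmul q m (tone m) Q = Q"
proof (intro ext)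
  fix n r c
  have "tmul q m (tone m) Q n r c = (\<Sum>j\<le>n. \<Sum>l<m. (if j = 0 \<and> r = l \<and> r < m then Q (n-j) l c ^ q ^ j else 0))"
    unfolding tmul_def tone_def by (intro sum.cong refl) auto
  also have "\<dots> = (\<Sum>j\<le>n. if j = 0 then (if r < m then Q n r c else 0) else 0)"
    by (intro sum.cong refl) (auto simp: sum.delta)
  also have "\<dots> = Q n r c" using assms by (auto simp: sum.delta)
  finally show "tmul q m (tone m) Q n r c = Q n r c" .
qed

lemma tcomp_tone:
  fixes f :: "nat \<Rightarrow> nat \<Rightarrow> 'a::field"
  assumes "\<And>n c. c \<ge> m \<Longrightarrow> f n c = 0" and q0: "q > 0"
  shows "tcomp q m f (tone m) = f"
proof (intro ext)
  fix n c
  have "tcomp q m f (tone m) n c = (\<Sum>j\<le>n. \<Sum>l<m. (if j = n \<and> l = c \<and> c < m then f j l else 0))"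
    unfolding tcomp_def tone_def using q0 by (intro sum.cong refl) auto
  also have "\<dots> = (\<Sum>j\<le>n. if j = n then (if c < m then f n c else 0) else 0)"
    by (intro sum.cong refl) (auto simp: sum.delta)
  also have "\<dots> = f n c" using assms by (auto simp: sum.delta)
  finally show "tcomp q m f (tone m) n c = f n c" .
qed

lemma tcomp_add: "tcomp q m (\<lambda>n c. f n c + g n c) M = (\<lambda>n c. tcomp q m f M n c + tcomp q m g M n c)"
  unfolding tcomp_def by (intro ext) (simp add: sum.distrib distrib_right)

lemma tcomp_smult: "tcomp q m (\<lambda>n c. x * f n c) M = (\<lambda>n c. x * tcomp q m f M n c)"
  unfolding tcomp_def by (intro ext) (simp add: sum_distrib_left mult.assoc)

lemma tcomp_sum: "tcomp q m (\<lambda>n c. \<Sum>s\<in>S. f s n c) M = (\<lambda>n c. \<Sum>s\<in>S. tcomp q m (f s) M n c)"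
  unfolding tcomp_def by (intro ext) (simp add: sum_distrib_right sum.swap[where B=S])

lemma tcomp_diff: "tcomp q m (\<lambda>n c. f n c - g n c) M = (\<lambda>n c. tcomp q m f M n c - tcomp q m g M n c)"
  unfolding tcomp_def by (intro ext) (simp add: sum_subtractf left_diff_distrib)

lemma tcomp_zero: "tcomp q m (\<lambda>n c. 0) M = (\<lambda>n c. 0)"
  unfolding tcomp_def by (intro ext) simp


lemma tmul_fin:
  fixes P Q :: "nat \<Rightarrow> nat \<Rightarrow> nat \<Rightarrow> 'a::field"
  assumes "\<And>n r c. n > a \<Longrightarrow> P n r c = 0" "\<And>n r c. n > b \<Longrightarrow> Q n r c = 0" "q > 0" "n > a + b"
  shows "tmul q m P Q n r c = 0"
  unfolding tmul_def
proof (rule sum.neutral, rule ballI)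
  fix j assume "j \<in> {..n}"
  show "(\<Sum>l<m. P j r l * Q (n - j) l c ^ q ^ j) = 0"
  proof (cases "j > a")
    case True then show ?thesis using assms by simp
  next
    case False then have "n - j > b" using assms(4) by auto
    then show ?thesis using assms by (simp add: zero_power)
  qed
qed

lemma tmul_out:
  fixes P Q :: "nat \<Rightarrow> nat \<Rightarrow> nat \<Rightarrow> 'a::field"
  assumes "\<And>n r c. r \<ge> m \<or> c \<ge> m \<Longrightarrow> P n r c = 0" "\<And>n r c. r \<ge> m \<or> c \<ge> m \<Longrightarrow> Q n r c = 0" "q > 0"
    and "r \<ge> m \<or> c \<ge> m"
  shows "tmul q m P Q n r c = 0"
  unfolding tmul_def
proof (rule sum.neutral, rule ballI, rule sum.neutral, rule ballI)
  fix j l assume "j \<in> {..n}" "l \<in> {..<m}"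
  show "P j r l * Q (n - j) l c ^ q ^ j = 0"
  proof (cases "r \<ge> m")
    case True then show ?thesis using assms(1) by simp
  next
    case False then have "c \<ge> m" using assms(4) by simp
    then show ?thesis using assms(2,3) by (simp add: zero_power)
  qed
qed

locale tmod =
  fixes q m d :: nat and theta :: "'a::field" and F :: "'a set" and Phi :: "nat \<Rightarrow> nat \<Rightarrow> nat \<Rightarrow> 'a"
  assumes fr: "frob_ok TYPE('a) q"
  and m0: "m > 0"
  and sf: "is_subfield F"
  and thF: "theta \<in> F"
  and PhiF: "\<And>n r c. Phi n r c \<in> F"
  and Phi_out: "\<And>n r c. r \<ge> m \<or> c \<ge> m \<Longrightarrow> Phi n r c = 0"
  and Phi_fin: "\<And>n r c. n > d \<Longrightarrow> Phi n r c = 0"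
  and nil: "mat_nilpotent m (\<lambda>r c. Phi 0 r c - theta * mat_id m r c)"
begin

lemma q0: "q > 0" using frob_pos[OF fr] .

lemma F0: "0 \<in> F" and F1: "1 \<in> F" and Fadd: "x \<in> F \<Longrightarrow> y \<in> F \<Longrightarrow> x + y \<in> F"
  and Fmult: "x \<in> F \<Longrightarrow> y \<in> F \<Longrightarrow> x * y \<in> F" and Fneg: "x \<in> F \<Longrightarrow> -x \<in> F"
  and Finv: "x \<in> F \<Longrightarrow> inverse x \<in> F"
  using sf unfolding is_subfield_def by blast+

lemma Fdiff: "x \<in> F \<Longrightarrow> y \<in> F \<Longrightarrow> x - y \<in> F"
  using Fadd[OF _ Fneg, of x y] by (simp only: diff_conv_add_uminus)

lemma Fdiv: "x \<in> F \<Longrightarrow> y \<in> F \<Longrightarrow> x / y \<in> F"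
  using Fmult[OF _ Finv, of x y] by (simp only: divide_inverse)

lemma Fpow: "x \<in> F \<Longrightarrow> x ^ k \<in> F"
proof (induct k)
  case 0 then show ?case using F1 by simp
next
  case (Suc k) then show ?case using Fmult by simp
qed

lemma Fsum: "(\<And>x. x \<in> A \<Longrightarrow> f x \<in> F) \<Longrightarrow> sum f A \<in> F"
proof (induct A rule: infinite_finite_induct)
  case (infinite A) then show ?case using F0 by simp
next
  case empty then show ?case using F0 by simp
next
  case (insert x A) then show ?case using Fadd by simp
qed

lemma Fprod: "(\<And>x. x \<in> A \<Longrightarrow> f x \<in> F) \<Longrightarrow> prod f A \<in> F"
proof (induct A rule: infinite_finite_induct)
  case (infinite A) then show ?case using F1 by simp
next
  case empty then show ?case using F1 by simp
next
  case (insert x A) then show ?case using Fmult by simp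
qed

abbreviation T where "T \<equiv> tpow q m Phi"

lemma tpow_out: "r \<ge> m \<or> c \<ge> m \<Longrightarrow> T k n r c = 0"
proof (induct k arbitrary: n r c)
  case 0 then show ?case by (auto simp: tone_def)
next
  case (Suc k)
  have "tmul q m Phi (T k) n r c = 0"
    by (rule tmul_out[OF Phi_out Suc.hyps q0 Suc.prems])
  then show ?case by simp
qed

lemma tpow_fin: "n > k * d \<Longrightarrow> T k n r c = 0"
proof (induct k arbitrary: n r c)
  case 0 then show ?case by (auto simp: tone_def)
next
  case (Suc k)
  have "tmul q m Phi (T k) n r c = 0"
    by (rule tmul_fin[where a=d and b="k*d", OF Phi_fin Suc.hyps q0]) (use Suc.prems in auto)
  then show ?case by simp
qed

lemma tpow_F: "T k n r c \<in> F"
proof (induct k arbitrary: n r c)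
  case 0 then show ?case by (auto simp: tone_def F0 F1)
next
  case (Suc k)
  have "tmul q m Phi (T k) n r c \<in> F"
    unfolding tmul_def by (rule Fsum, rule Fsum, rule Fmult[OF PhiF Fpow[OF Suc]])
  then show ?case by simp
qed

lemma tpow_add: "T (a + b) = tmul q m (T a) (T b)"
proof (induct a)
  case 0
  have "tmul q m (tone m) (T b) = T b" by (rule tmul_tone_left) (simp add: tpow_out)
  then show ?case by simp
next
  case (Suc a)
  have "T (Suc a + b) = tmul q m Phi (T (a + b))" by (simp only: add_Suc tpow.simps)
  also have "\<dots> = tmul q m Phi (tmul q m (T a) (T b))" using Suc by (simp only:)
  also have "\<dots> = tmul q m (T (Suc a)) (T b)" by (simp only: tmul_assoc[OF fr] tpow.simps)
  finally show ?case .
qed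


lemma tcomp_Hom:
  assumes f: "f \<in> Hom F m" and MF: "\<And>n r c. M n r c \<in> F"
    and Mout: "\<And>n r c. r \<ge> m \<or> c \<ge> m \<Longrightarrow> M n r c = 0"
    and Mfin: "\<And>n r c. n > DM \<Longrightarrow> M n r c = 0"
  shows "tcomp q m f M \<in> Hom F m"
proof -
  obtain Df where Df: "\<And>n c. n > Df \<Longrightarrow> f n c = 0" using f unfolding Hom_def by blast
  have fF: "\<And>n c. f n c \<in> F" using f unfolding Hom_def by blast
  have "tcomp q m f M n c \<in> F" for n c
    unfolding tcomp_def by (intro Fsum Fmult fF Fpow MF)
  moreover have "tcomp q m f M n c = 0" if "c \<ge> m" for n c
    unfolding tcomp_def using that Mout q0 by (simp add: zero_power)
  moreover have "tcomp q m f M n c = 0" if "n > Df + DM" for n c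
    unfolding tcomp_def
  proof (rule sum.neutral, rule ballI)
    fix j assume "j \<in> {..n}"
    show "(\<Sum>l<m. f j l * M (n - j) l c ^ q ^ j) = 0"
    proof (cases "j > Df")
      case True then show ?thesis using Df by simp
    next
      case False then have "n - j > DM" using that by auto
      then show ?thesis using Mfin q0 by (simp add: zero_power)
    qed
  qed
  ultimately show ?thesis unfolding Hom_def by blast
qed

lemma tpow_Hom: "f \<in> Hom F m \<Longrightarrow> tcomp q m f (T k) \<in> Hom F m"
  by (rule tcomp_Hom[where DM="k*d"]) (auto intro: tpow_F tpow_out tpow_fin)

lemma FT_act_bound:
  assumes "degree a < K"
  shows "FT_act q m Phi a f n c = (\<Sum>k<K. coeff a k * tcomp q m f (T k) n c)"
proof -
  have "FT_act q m Phi a f n c = (\<Sum>k\<le>degree a. coeff a k * tcomp q m f (T k) n c)"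
    unfolding FT_act_def by simp
  also have "\<dots> = (\<Sum>k<K. coeff a k * tcomp q m f (T k) n c)"
    by (rule sum.mono_neutral_left) (use assms in \<open>auto simp: coeff_eq_0\<close>)
  finally show ?thesis .
qed

lemma FT_act_add:
  "FT_act q m Phi (a + b) f = (\<lambda>n c. FT_act q m Phi a f n c + FT_act q m Phi b f n c)"
proof (intro ext)
  fix n c
  define K where "K = Suc (max (degree a) (degree b))"
  have "degree (a + b) < K" unfolding K_def using degree_add_le_max[of a b] by auto
  then show "FT_act q m Phi (a + b) f n c = FT_act q m Phi a f n c + FT_act q m Phi b f n c"
    by (simp add: FT_act_bound[where K=K] K_def sum.distrib distrib_right)
qed

lemma FT_act_const:
  assumes "\<And>n c. c \<ge> m \<Longrightarrow> f n c = 0"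
  shows "FT_act q m Phi [:x:] f = (\<lambda>n c. x * f n c)"
  by (intro ext) (simp add: FT_act_def tcomp_tone[OF assms q0])

lemma FT_act_one:
  assumes "\<And>n c. c \<ge> m \<Longrightarrow> f n c = 0"
  shows "FT_act q m Phi 1 f = f"
  using FT_act_const[OF assms, where x=1] by (simp add: one_pCons)

lemma sum_shift_lt: "(\<Sum>k<(K::nat)+i. (G k :: 'b::comm_monoid_add)) = (\<Sum>k<i. G k) + (\<Sum>k<K. G (k+i))"
  by (induct K) (auto simp: add_ac)

lemma FT_act_shift:
  "tcomp q m (FT_act q m Phi a f) (T i) = FT_act q m Phi (monom 1 i * a) f"
proof (intro ext)
  fix n c
  define K where "K = Suc (degree a)"
  have dK: "degree a < K" unfolding K_def by simp
  have "degree (monom 1 i * a) < K + i"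
    using degree_mult_le[of "monom 1 i" a] degree_monom_le[of "1::'a" i] dK by linarith
  then have "FT_act q m Phi (monom 1 i * a) f n c = (\<Sum>k<K+i. coeff (monom 1 i * a) k * tcomp q m f (T k) n c)"
    by (rule FT_act_bound)
  also have "\<dots> = (\<Sum>k<K. coeff a k * tcomp q m f (T (k+i)) n c)"
    by (simp add: sum_shift_lt coeff_monom_mult)
  also have "\<dots> = (\<Sum>k<K. coeff a k * tcomp q m (tcomp q m f (T k)) (T i) n c)"
    by (simp add: tcomp_tcomp[OF fr] tpow_add)
  also have "\<dots> = tcomp q m (\<lambda>n c. \<Sum>k<K. coeff a k * tcomp q m f (T k) n c) (T i) n c"
    by (simp add: tcomp_sum tcomp_smult)
  also have "(\<lambda>n c. \<Sum>k<K. coeff a k * tcomp q m f (T k) n c) = FT_act q m Phi a f"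
    by (intro ext) (simp add: FT_act_bound[OF dK])
  finally show "tcomp q m (FT_act q m Phi a f) (T i) n c = FT_act q m Phi (monom 1 i * a) f n c" ..
qed

lemma Hom_diff:
  assumes "f \<in> Hom F m" "g \<in> Hom F m"
  shows "(\<lambda>n c. f n c - g n c) \<in> Hom F m"
proof -
  obtain D1 where D1: "\<And>n c. n > D1 \<Longrightarrow> f n c = 0" using assms(1) unfolding Hom_def by blast
  obtain D2 where D2: "\<And>n c. n > D2 \<Longrightarrow> g n c = 0" using assms(2) unfolding Hom_def by blast
  have "\<forall>n>max D1 D2. \<forall>c. f n c - g n c = 0" using D1 D2 by simp
  moreover have "\<forall>n c. f n c - g n c \<in> F" using assms unfolding Hom_def by (auto intro: Fdiff)
  moreover have "\<forall>n c. c \<ge> m \<longrightarrow> f n c - g n c = 0" using assms unfolding Hom_def by auto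
  ultimately show ?thesis unfolding Hom_def by blast
qed

lemma FT_add: "a \<in> FT F \<Longrightarrow> b \<in> FT F \<Longrightarrow> a + b \<in> FT F"
  unfolding FT_def by (auto intro: Fadd)

lemma FT_monom_mult: "a \<in> FT F \<Longrightarrow> monom 1 i * a \<in> FT F"
  unfolding FT_def by (auto simp: coeff_monom_mult intro: F0)

lemma FT_const: "x \<in> F \<Longrightarrow> [:x:] \<in> FT F"
  unfolding FT_def by (auto simp: coeff_pCons split: nat.splits intro: F0)

lemma FT_one: "1 \<in> FT F"
  using FT_const[OF F1] by (simp add: one_pCons)

end

definition ee :: "nat \<times> nat \<Rightarrow> nat \<Rightarrow> nat \<Rightarrow> 'a::field" where
  "ee p = (\<lambda>n c. if n = fst p \<and> c = snd p then 1 else 0)"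

locale tmodD = tmod +
  fixes i D :: nat and Linv :: "nat \<Rightarrow> nat \<Rightarrow> 'a"
  assumes i0: "i > 0" and D0: "D > 0"
  and Pfin: "\<And>n r c. n > D \<Longrightarrow> T i n r c = 0"
  and LinvF: "\<And>r c. Linv r c \<in> F"
  and Linv_inv: "\<And>k c. k < m \<Longrightarrow> c < m \<Longrightarrow> (\<Sum>l<m. Linv k l * T i D l c) = (if k = c then 1 else 0)"
begin

abbreviation Sidx where "Sidx \<equiv> {..<D} \<times> {..<m}"

definition rep :: "(nat \<Rightarrow> nat \<Rightarrow> 'a) \<Rightarrow> bool" where
  "rep f \<longleftrightarrow> (\<exists>g. (\<forall>p\<in>Sidx. g p \<in> FT F) \<and>
      f = (\<lambda>n c. \<Sum>p\<in>Sidx. FT_act q m Phi (g p) (ee p) n c))"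

lemma ee_out: "p \<in> Sidx \<Longrightarrow> c \<ge> m \<Longrightarrow> ee p n c = 0"
  unfolding ee_def by auto

lemma rep_add: "rep f \<Longrightarrow> rep g \<Longrightarrow> rep (\<lambda>n c. f n c + g n c)"
proof -
  assume "rep f" "rep g"
  then obtain g1 g2 where g1: "\<forall>p\<in>Sidx. g1 p \<in> FT F" "f = (\<lambda>n c. \<Sum>p\<in>Sidx. FT_act q m Phi (g1 p) (ee p) n c)"
    and g2: "\<forall>p\<in>Sidx. g2 p \<in> FT F" "g = (\<lambda>n c. \<Sum>p\<in>Sidx. FT_act q m Phi (g2 p) (ee p) n c)"
    unfolding rep_def by blast
  show ?thesis unfolding rep_def
    by (rule exI[of _ "\<lambda>p. g1 p + g2 p"]) (use g1 g2 in \<open>auto intro: FT_add simp: FT_act_add sum.distrib\<close>)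
qed

lemma rep_comp: "rep h \<Longrightarrow> rep (tcomp q m h (T i))"
proof -
  assume "rep h"
  then obtain g where g: "\<forall>p\<in>Sidx. g p \<in> FT F" "h = (\<lambda>n c. \<Sum>p\<in>Sidx. FT_act q m Phi (g p) (ee p) n c)"
    unfolding rep_def by blast
  show ?thesis unfolding rep_def
    by (rule exI[of _ "\<lambda>p. monom 1 i * g p"]) (use g in \<open>auto intro: FT_monom_mult simp: tcomp_sum FT_act_shift\<close>)
qed

lemma rep_low:
  assumes f: "f \<in> Hom F m" and low: "\<And>n c. n \<ge> D \<Longrightarrow> f n c = 0"
  shows "rep f"
  unfolding rep_def
proof (rule exI[of _ "\<lambda>p. [:f (fst p) (snd p):]"], intro conjI ballI ext)
  fix p assume "p \<in> Sidx"
  show "[:f (fst p) (snd p):] \<in> FT F" using f unfolding Hom_def by (auto intro: FT_const)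
next
  fix n c
  have "(\<Sum>p\<in>Sidx. FT_act q m Phi [:f (fst p) (snd p):] (ee p) n c)
      = (\<Sum>p\<in>Sidx. if p = (n, c) then f n c else 0)"
  proof (intro sum.cong refl)
    fix p assume p: "p \<in> Sidx"
    have "FT_act q m Phi [:f (fst p) (snd p):] (ee p) = (\<lambda>n c. f (fst p) (snd p) * ee p n c)"
      by (rule FT_act_const) (rule ee_out[OF p])
    then show "FT_act q m Phi [:f (fst p) (snd p):] (ee p) n c = (if p = (n, c) then f n c else 0)"
      by (auto simp: ee_def)
  qed
  also have "\<dots> = f n c"
    using low f unfolding Hom_def by (auto simp: sum.delta)
  finally show "f n c = (\<Sum>p\<in>Sidx. FT_act q m Phi [:f (fst p) (snd p):] (ee p) n c)" ..
qed


lemma div_step: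
  assumes f: "f \<in> Hom F m" and ND: "N \<ge> D" and fN: "\<And>n c. n > N \<Longrightarrow> f n c = 0"
  obtains h where "h \<in> Hom F m" "\<And>n c. n > N - D \<Longrightarrow> h n c = 0"
    "\<And>n c. n \<ge> N \<Longrightarrow> f n c = tcomp q m h (T i) n c"
proof -
  define Q where "Q = q^(N-D)"
  define w where "w = (\<lambda>l. \<Sum>k<m. f N k * Linv k l ^ Q)"
  define h where "h = (\<lambda>n c. if n = N - D \<and> c < m then w c else (0::'a))"
  have fF: "\<And>n c. f n c \<in> F" and fout: "\<And>n c. c \<ge> m \<Longrightarrow> f n c = 0"
    using f unfolding Hom_def by auto
  have wF: "w l \<in> F" for l unfolding w_def by (intro Fsum Fmult fF Fpow LinvF)
  have hHom: "h \<in> Hom F m"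
    unfolding Hom_def h_def using wF F0 by (auto intro!: exI[of _ "N - D"])
  have hfin: "\<And>n c. n > N - D \<Longrightarrow> h n c = 0" unfolding h_def by auto
  have key: "f n c = tcomp q m h (T i) n c" if n: "n \<ge> N" for n c
  proof -
    have "tcomp q m h (T i) n c = (\<Sum>j\<le>n. if j = N - D then (\<Sum>l<m. w l * T i (n - j) l c ^ q ^ j) else 0)"
      unfolding tcomp_def h_def by (intro sum.cong refl) auto
    also have "\<dots> = (\<Sum>l<m. w l * T i (n - (N - D)) l c ^ Q)"
      using n ND by (simp add: sum.delta Q_def)
    finally have tc: "tcomp q m h (T i) n c = (\<Sum>l<m. w l * T i (n - (N - D)) l c ^ Q)" .
    show ?thesis
    proof (cases "n > N")
      case True
      then have "n - (N - D) > D" using ND by auto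
      then show ?thesis using tc fN[OF True] Pfin Q_def q0 by (simp add: zero_power)
    next
      case False
      then have nN: "n = N" using n by simp
      then have nD: "n - (N - D) = D" using ND by simp
      show ?thesis
      proof (cases "c < m")
        case False
        then show ?thesis using tc fout tpow_out q0 Q_def by (simp add: zero_power)
      next
        case True
        have "(\<Sum>l<m. w l * T i D l c ^ Q) = (\<Sum>l<m. \<Sum>k<m. f N k * (Linv k l * T i D l c) ^ Q)"
          unfolding w_def by (simp add: sum_distrib_right power_mult_distrib mult.assoc)
        also have "\<dots> = (\<Sum>k<m. \<Sum>l<m. f N k * (Linv k l * T i D l c) ^ Q)"
          by (rule sum.swap)
        also have "\<dots> = (\<Sum>k<m. f N k * (\<Sum>l<m. Linv k l * T i D l c) ^ Q)"
          by (simp only: sum_distrib_left frob_sum[OF fr] Q_def)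
        also have "\<dots> = (\<Sum>k<m. if k = c then f N c else 0)"
          using True q0 by (intro sum.cong refl) (auto simp: Linv_inv Q_def zero_power)
        also have "\<dots> = f N c" using True by simp
        finally show ?thesis using tc nN nD by simp
      qed
    qed
  qed
  show ?thesis using that[OF hHom hfin key] .
qed

lemma rep_all_N: "\<forall>f. f \<in> Hom F m \<longrightarrow> (\<forall>n c. n \<ge> N \<longrightarrow> f n c = 0) \<longrightarrow> rep f"
proof (induct N rule: less_induct)
  case (less N)
  show ?case
  proof (intro allI impI)
    fix f assume f: "f \<in> Hom F m" and fN: "\<forall>n c. n \<ge> N \<longrightarrow> f n c = 0"
    show "rep f"
    proof (cases "N \<le> D")
      case True then show ?thesis using rep_low[OF f] fN by auto
    next
      case False
      define N' where "N' = N - 1"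
      have N': "N' \<ge> D" "N' < N" using False D0 unfolding N'_def by auto
      have fN': "\<And>n c. n > N' \<Longrightarrow> f n c = 0" using fN unfolding N'_def by auto
      obtain h where h: "h \<in> Hom F m" "\<And>n c. n > N' - D \<Longrightarrow> h n c = 0"
        "\<And>n c. n \<ge> N' \<Longrightarrow> f n c = tcomp q m h (T i) n c"
        using div_step[OF f N'(1) fN'] by blast
      have "N' - D < N" using N' by auto
      moreover have "\<forall>n c. n \<ge> N' - D + 1 \<longrightarrow> h n c = 0" using h(2) by auto
      ultimately have "N' - D + 1 < N \<or> N' - D + 1 = N" by auto
      have "N' - D + 1 < N" using N' D0 by auto
      then have rh: "rep h" using less h(1) \<open>\<forall>n c. n \<ge> N' - D + 1 \<longrightarrow> h n c = 0\<close> by blast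
      have hc: "tcomp q m h (T i) \<in> Hom F m" by (rule tpow_Hom[OF h(1)])
      define f' where "f' = (\<lambda>n c. f n c - tcomp q m h (T i) n c)"
      have f'H: "f' \<in> Hom F m" unfolding f'_def by (rule Hom_diff[OF f hc])
      have "\<forall>n c. n \<ge> N' \<longrightarrow> f' n c = 0" unfolding f'_def using h(3) by simp
      then have rf': "rep f'" using less N'(2) f'H by blast
      have "f = (\<lambda>n c. f' n c + tcomp q m h (T i) n c)" unfolding f'_def by simp
      then show "rep f" using rep_add[OF rf' rep_comp[OF rh]] by simp
    qed
  qed
qed

lemma rep_all: "f \<in> Hom F m \<Longrightarrow> rep f"
proof -
  assume f: "f \<in> Hom F m"
  then obtain Df where "\<And>n c. n > Df \<Longrightarrow> f n c = 0" unfolding Hom_def by blast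
  then have "\<forall>n c. n \<ge> Suc Df \<longrightarrow> f n c = 0" by auto
  then show "rep f" using rep_all_N f by blast
qed

end


section \<open>Row-vector action of polynomials in a matrix\<close>

definition rowmul :: "nat \<Rightarrow> (nat \<Rightarrow> 'a::field) \<Rightarrow> (nat \<Rightarrow> nat \<Rightarrow> 'a) \<Rightarrow> nat \<Rightarrow> 'a" where
  "rowmul m v M = (\<lambda>c. \<Sum>l<m. v l * M l c)"

fun rp :: "nat \<Rightarrow> (nat \<Rightarrow> nat \<Rightarrow> 'a::field) \<Rightarrow> nat \<Rightarrow> (nat \<Rightarrow> 'a) \<Rightarrow> nat \<Rightarrow> 'a" where
  "rp m M 0 v = v"
| "rp m M (Suc k) v = rp m M k (rowmul m v M)"

definition act :: "nat \<Rightarrow> (nat \<Rightarrow> nat \<Rightarrow> 'a::field) \<Rightarrow> 'a poly \<Rightarrow> (nat \<Rightarrow> 'a) \<Rightarrow> nat \<Rightarrow> 'a" where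
  "act m M p v = (\<lambda>c. \<Sum>k\<le>degree p. coeff p k * rp m M k v c)"

lemma rowmul_add: "rowmul m (\<lambda>c. u c + v c) M = (\<lambda>c. rowmul m u M c + rowmul m v M c)"
  unfolding rowmul_def by (simp add: distrib_right sum.distrib)

lemma rowmul_smult: "rowmul m (\<lambda>c. x * v c) M = (\<lambda>c. x * rowmul m v M c)"
  unfolding rowmul_def by (simp add: sum_distrib_left mult.assoc)

lemma rowmul_zero: "rowmul m (\<lambda>c. 0) M = (\<lambda>c. 0)"
  unfolding rowmul_def by simp

lemma rp_add: "rp m M k (\<lambda>c. u c + v c) = (\<lambda>c. rp m M k u c + rp m M k v c)"
  by (induct k arbitrary: u v) (simp_all add: rowmul_add)

lemma rp_smult: "rp m M k (\<lambda>c. x * v c) = (\<lambda>c. x * rp m M k v c)"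
  by (induct k arbitrary: v) (simp_all add: rowmul_smult)

lemma rp_zero: "rp m M k (\<lambda>c. 0) = (\<lambda>c. 0)"
  by (induct k) (simp_all add: rowmul_zero)

lemma rp_rowmul: "rp m M k (rowmul m v M) = rowmul m (rp m M k v) M"
proof (induct k arbitrary: v)
  case 0 then show ?case by simp
next
  case (Suc k) then show ?case by simp
qed

lemma rp_sum: "rp m M k (\<lambda>c. \<Sum>s\<in>S. v s c) = (\<lambda>c. \<Sum>s\<in>S. rp m M k (v s) c)"
proof (induct S rule: infinite_finite_induct)
  case (infinite A) then show ?case by (simp add: rp_zero)
next
  case empty then show ?case by (simp add: rp_zero)
next
  case (insert x F) then show ?case by (simp add: rp_add)
qed

lemma rowmul_sum: "rowmul m (\<lambda>c. \<Sum>s\<in>S. v s c) M = (\<lambda>c. \<Sum>s\<in>S. rowmul m (v s) M c)"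
  unfolding rowmul_def by (intro ext) (simp add: sum_distrib_right sum.swap[of _ S])

lemma act_bound: "degree p < K \<Longrightarrow> act m M p v c = (\<Sum>k<K. coeff p k * rp m M k v c)"
  unfolding act_def by (rule sum.mono_neutral_left) (auto simp: coeff_eq_0)

lemma act_add: "act m M (p + p') v = (\<lambda>c. act m M p v c + act m M p' v c)"
proof (intro ext)
  fix c
  define K where "K = Suc (max (degree p) (degree p'))"
  have "degree (p + p') < K" unfolding K_def using degree_add_le_max[of p p'] by auto
  then show "act m M (p + p') v c = act m M p v c + act m M p' v c"
    by (simp add: act_bound[where K=K] K_def sum.distrib distrib_right)
qed

lemma act_smult_poly: "act m M (Polynomial.smult x p) v = (\<lambda>c. x * act m M p v c)"
  unfolding act_def by (intro ext) (simp add: sum_distrib_left mult.assoc)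

lemma act_zero_poly: "act m M 0 v = (\<lambda>c. 0)"
  unfolding act_def by simp

lemma act_vadd: "act m M p (\<lambda>c. u c + v c) = (\<lambda>c. act m M p u c + act m M p v c)"
  unfolding act_def by (intro ext) (simp add: rp_add distrib_left sum.distrib)

lemma act_vsmult: "act m M p (\<lambda>c. x * v c) = (\<lambda>c. x * act m M p v c)"
  unfolding act_def by (intro ext) (simp add: rp_smult sum_distrib_left mult.left_commute)

lemma act_vzero: "act m M p (\<lambda>c. 0) = (\<lambda>c. 0)"
  unfolding act_def by (intro ext) (simp add: rp_zero)

lemma act_rowmul: "act m M p (rowmul m v M) = rowmul m (act m M p v) M"
  unfolding act_def by (intro ext) (simp add: rp_rowmul rowmul_sum rowmul_smult)

lemma act_pCons: "act m M (pCons x p) v = (\<lambda>c. x * v c + act m M p (rowmul m v M) c)"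
proof (intro ext)
  fix c
  define K where "K = Suc (degree p)"
  have d1: "degree (pCons x p) < Suc K" unfolding K_def using degree_pCons_le[of x p] by auto
  have d2: "degree p < K" unfolding K_def by simp
  show "act m M (pCons x p) v c = x * v c + act m M p (rowmul m v M) c"
    unfolding act_bound[OF d1] act_bound[OF d2] sum.lessThan_Suc_shift by simp
qed

lemma act_mult: "act m M (p * p') v = act m M p (act m M p' v)"
proof (induct p arbitrary: v rule: pCons_induct)
  case 0 then show ?case by (simp add: act_zero_poly)
next
  case (pCons x p)
  have "act m M (pCons x p * p') v = act m M (Polynomial.smult x p' + pCons 0 (p * p')) v" by simp
  also have "\<dots> = (\<lambda>c. x * act m M p' v c + act m M (p * p') (rowmul m v M) c)"
    by (simp add: act_add act_smult_poly act_pCons)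
  also have "\<dots> = (\<lambda>c. x * act m M p' v c + act m M p (act m M p' (rowmul m v M)) c)"
    by (simp add: pCons)
  also have "\<dots> = act m M (pCons x p) (act m M p' v)"
    by (simp add: act_pCons act_rowmul)
  finally show ?case .
qed


definition frobM :: "nat \<Rightarrow> (nat \<Rightarrow> nat \<Rightarrow> 'a::field) \<Rightarrow> nat \<Rightarrow> nat \<Rightarrow> 'a" where
  "frobM Q B = (\<lambda>r c. (B r c)^Q)"

lemma mat_pow_out: "c \<ge> m \<Longrightarrow> mat_pow m B k l c = 0"
  by (induct k arbitrary: l) (simp_all add: mat_id_def mat_mult_def)

lemma rowmul_out:
  assumes "\<And>r c. r \<ge> m \<or> c \<ge> m \<Longrightarrow> B r c = 0" "c \<ge> m"
  shows "rowmul m v B c = 0"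
  unfolding rowmul_def using assms by simp

lemma rp_mat_pow:
  fixes B :: "nat \<Rightarrow> nat \<Rightarrow> 'a::field"
  assumes fr: "frob_ok TYPE('a) q"
    and Bout: "\<And>r c. r \<ge> m \<or> c \<ge> m \<Longrightarrow> B r c = 0"
    and vout: "\<And>c. c \<ge> m \<Longrightarrow> v c = 0"
  shows "(\<Sum>l<m. v l * (mat_pow m B k l c)^(q^n)) = rp m (frobM (q^n) B) k v c"
  using vout
proof (induct k arbitrary: v c)
  case 0
  show ?case
  proof (cases "c < m")
    case True
    then have "(\<Sum>l<m. v l * (mat_pow m B 0 l c)^(q^n)) = (\<Sum>l<m. if l = c then v c else 0)"
      using frob_pos[OF fr] by (intro sum.cong refl) (auto simp: mat_id_def zero_power)
    then show ?thesis using True by simp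
  next
    case False
    then show ?thesis using 0 frob_pos[OF fr] by (simp add: mat_id_def zero_power)
  qed
next
  case (Suc k)
  have ro: "\<And>c. c \<ge> m \<Longrightarrow> rowmul m v (frobM (q^n) B) c = 0"
    using Bout frob_pos[OF fr] by (auto simp: rowmul_def frobM_def zero_power)
  have "(\<Sum>l<m. v l * (mat_pow m B (Suc k) l c)^(q^n))
      = (\<Sum>l<m. \<Sum>j<m. v l * (B l j)^(q^n) * (mat_pow m B k j c)^(q^n))"
    by (simp add: mat_mult_def frob_sum[OF fr] power_mult_distrib sum_distrib_left mult.assoc)
  also have "\<dots> = (\<Sum>j<m. \<Sum>l<m. v l * (B l j)^(q^n) * (mat_pow m B k j c)^(q^n))"
    by (rule sum.swap)
  also have "\<dots> = (\<Sum>j<m. rowmul m v (frobM (q^n) B) j * (mat_pow m B k j c)^(q^n))"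
    by (simp add: rowmul_def frobM_def sum_distrib_right)
  also have "\<dots> = rp m (frobM (q^n) B) k (rowmul m v (frobM (q^n) B)) c"
    by (rule Suc.hyps[OF ro])
  finally show ?case by simp
qed

context tmod
begin

abbreviation A where "A \<equiv> (\<lambda>r c. Phi 0 r c)"
abbreviation Nm where "Nm \<equiv> (\<lambda>r c. Phi 0 r c - theta * mat_id m r c)"

lemma A_out: "r \<ge> m \<or> c \<ge> m \<Longrightarrow> A r c = 0" using Phi_out by simp

lemma Nm_out: "r \<ge> m \<or> c \<ge> m \<Longrightarrow> Nm r c = 0" using Phi_out by (auto simp: mat_id_def)

lemma tpow_const_term: "T k 0 r c = mat_pow m A k r c"
proof (induct k arbitrary: r c)
  case 0 then show ?case by (simp add: tone_def mat_id_def)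
next
  case (Suc k) then show ?case by (simp add: tmul_def mat_mult_def)
qed

lemma tcomp_const:
  assumes "\<And>n r c. n > 0 \<Longrightarrow> M n r c = 0"
  shows "tcomp q m f M n c = (\<Sum>l<m. f n l * (M 0 l c)^(q^n))"
proof -
  have "tcomp q m f M n c = (\<Sum>j\<le>n. if j = n then (\<Sum>l<m. f n l * (M 0 l c)^(q^n)) else 0)"
    unfolding tcomp_def using assms q0 by (intro sum.cong refl) (auto simp: zero_power)
  then show ?thesis by simp
qed

end

locale tmod0 = tmod +
  fixes i :: nat
  assumes i0: "i > 0" and Pconst: "\<And>n r c. n > 0 \<Longrightarrow> T i n r c = 0"
begin

lemma tpow_it_const: "n > 0 \<Longrightarrow> T (i * t) n r c = 0"
proof (induct t arbitrary: n r c)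
  case 0 then show ?case by (simp add: tone_def)
next
  case (Suc t)
  have "T (i * Suc t) = tmul q m (T (i*t)) (T i)" by (simp add: tpow_add[symmetric] add.commute)
  then show ?case using tmul_fin[where a=0 and b=0, OF _ _ q0, of "T (i*t)" "T i"] Suc Pconst by simp
qed

lemma FT_act_Xi:
  assumes Xi: "\<And>k. coeff a k \<noteq> 0 \<Longrightarrow> i dvd k" and f: "f \<in> Hom F m"
  shows "FT_act q m Phi a f n c = act m (frobM (q^n) A) a (f n) c"
  unfolding FT_act_def act_def
proof (intro sum.cong refl)
  fix k assume "k \<in> {..degree a}"
  show "coeff a k * tcomp q m f (T k) n c = coeff a k * rp m (frobM (q ^ n) A) k (f n) c"
  proof (cases "coeff a k = 0")
    case False
    then obtain t where t: "k = i * t" using Xi by (auto elim: dvdE)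
    have "tcomp q m f (T k) n c = (\<Sum>l<m. f n l * (T k 0 l c)^(q^n))"
      by (rule tcomp_const) (simp add: t tpow_it_const)
    also have "\<dots> = (\<Sum>l<m. f n l * (mat_pow m A k l c)^(q^n))" by (simp add: tpow_const_term)
    also have "\<dots> = rp m (frobM (q ^ n) A) k (f n) c"
      by (rule rp_mat_pow[OF fr A_out]) (use f in \<open>auto simp: Hom_def\<close>)
    finally show ?thesis by simp
  qed simp
qed

end


definition Xi :: "nat \<Rightarrow> 'a::field poly \<Rightarrow> bool" where
  "Xi i a \<longleftrightarrow> (\<forall>k. coeff a k \<noteq> 0 \<longrightarrow> i dvd k)"

lemma Xi_mult: "Xi i a \<Longrightarrow> Xi i b \<Longrightarrow> Xi i (a * b)"
  unfolding Xi_def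
proof (intro allI impI)
  fix k assume a: "\<forall>k. coeff a k \<noteq> 0 \<longrightarrow> i dvd k" and b: "\<forall>k. coeff b k \<noteq> 0 \<longrightarrow> i dvd k"
    and ne: "coeff (a * b) k \<noteq> 0"
  then obtain j where j: "j \<le> k" "coeff a j * coeff b (k - j) \<noteq> 0"
    unfolding coeff_mult by (meson atMost_iff sum.neutral)
  then have "i dvd j" "i dvd (k - j)" using a b by auto
  then have "i dvd (j + (k - j))" by (rule dvd_add)
  then show "i dvd k" using j by simp
qed

lemma Xi_one: "Xi i 1"
  unfolding Xi_def by (auto simp: coeff_1)

lemma Xi_power: "Xi i a \<Longrightarrow> Xi i (a ^ k)"
  by (induct k) (auto intro: Xi_one Xi_mult)

lemma Xi_prod: "(\<And>x. x \<in> S \<Longrightarrow> Xi i (f x)) \<Longrightarrow> Xi i (prod f S)"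
proof (induct S rule: infinite_finite_induct)
  case (infinite A) then show ?case by (simp add: Xi_one)
next
  case empty then show ?case by (simp add: Xi_one)
next
  case (insert x F) then show ?case by (simp add: Xi_mult)
qed

lemma Xi_base: "Xi i (monom 1 i - [:x:])"
  unfolding Xi_def by (auto simp: coeff_monom coeff_pCons split: if_splits nat.splits)

lemma base_nz: "i > 0 \<Longrightarrow> monom (1::'a::field) i - [:x:] \<noteq> 0"
proof
  assume "i > 0" "monom (1::'a) i - [:x:] = 0"
  then have "coeff (monom (1::'a) i - [:x:]) i = 0" by simp
  then show False using \<open>i > 0\<close> by (auto simp: coeff_pCons split: nat.splits)
qed

lemma base_dvd: "[:- c, 1:] dvd (monom (1::'a::field) i - [:c ^ i:])"
  unfolding poly_eq_0_iff_dvd[symmetric] by (simp add: poly_monom)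

context tmod
begin

lemma FT_mult: "a \<in> FT F \<Longrightarrow> b \<in> FT F \<Longrightarrow> a * b \<in> FT F"
  unfolding FT_def by (auto simp: coeff_mult intro!: Fsum Fmult)

lemma FT_power: "a \<in> FT F \<Longrightarrow> a ^ k \<in> FT F"
  by (induct k) (auto intro: FT_one FT_mult)

lemma FT_prod: "(\<And>x. x \<in> S \<Longrightarrow> f x \<in> FT F) \<Longrightarrow> prod f S \<in> FT F"
proof (induct S rule: infinite_finite_induct)
  case (infinite A) then show ?case by (simp add: FT_one)
next
  case empty then show ?case by (simp add: FT_one)
next
  case (insert x S) then show ?case by (simp add: FT_mult)
qed

lemma FT_base: "x \<in> F \<Longrightarrow> monom 1 i - [:x:] \<in> FT F"
  unfolding FT_def by (auto simp: coeff_monom coeff_pCons split: nat.splits intro: F0 F1 Fdiff Fneg)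

lemma rp_vout:
  assumes "\<And>r c. r \<ge> m \<or> c \<ge> m \<Longrightarrow> B r c = 0" "\<And>c. c \<ge> m \<Longrightarrow> v c = 0" "c \<ge> m"
  shows "rp m B k v c = 0"
  using assms(2,3)
proof (induct k arbitrary: v)
  case 0 then show ?case by simp
next
  case (Suc k)
  have "\<And>c. c \<ge> m \<Longrightarrow> rowmul m v B c = 0" by (rule rowmul_out[OF assms(1)])
  then show ?case using Suc by simp
qed

lemma act_vout:
  assumes "\<And>r c. r \<ge> m \<or> c \<ge> m \<Longrightarrow> B r c = 0" "\<And>c. c \<ge> m \<Longrightarrow> v c = 0" "c \<ge> m"
  shows "act m B p v c = 0"
  unfolding act_def using rp_vout[OF assms] by simp

lemma frobM_out: "(\<And>r c. r \<ge> m \<or> c \<ge> m \<Longrightarrow> B r c = 0) \<Longrightarrow> r \<ge> m \<or> c \<ge> m \<Longrightarrow> frobM (q^n) B r c = 0"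
  unfolding frobM_def using q0 by (simp add: zero_power)

lemma act_one: "act m B 1 v = v"
  unfolding act_def by simp

lemma act_lin:
  assumes wout: "\<And>c. c \<ge> m \<Longrightarrow> w c = 0"
  shows "act m (frobM (q^n) A) [:- (theta^(q^n)), 1:] w = rowmul m w (frobM (q^n) Nm)"
proof (intro ext)
  fix c
  have "act m (frobM (q^n) A) [:- (theta^(q^n)), 1:] w c = - (theta^(q^n)) * w c + rowmul m w (frobM (q^n) A) c"
    by (simp add: act_pCons act_one[unfolded one_pCons] act_zero_poly)
  also have "rowmul m w (frobM (q^n) A) c = rowmul m w (frobM (q^n) Nm) c + (\<Sum>l<m. w l * (theta * mat_id m l c)^(q^n))"
  proof -
    have "rowmul m w (frobM (q^n) A) c = (\<Sum>l<m. w l * (Nm l c + theta * mat_id m l c)^(q^n))"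
      unfolding rowmul_def frobM_def by simp
    also have "\<dots> = rowmul m w (frobM (q^n) Nm) c + (\<Sum>l<m. w l * (theta * mat_id m l c)^(q^n))"
      unfolding rowmul_def frobM_def by (simp only: frob_add[OF fr] distrib_left sum.distrib)
    finally show ?thesis .
  qed
  also have "(\<Sum>l<m. w l * (theta * mat_id m l c)^(q^n)) = theta^(q^n) * w c"
  proof (cases "c < m")
    case True
    then have "(\<Sum>l<m. w l * (theta * mat_id m l c)^(q^n)) = (\<Sum>l<m. if l = c then theta^(q^n) * w c else 0)"
      using q0 by (intro sum.cong refl) (auto simp: mat_id_def zero_power)
    then show ?thesis using True by simp
  next
    case False
    then show ?thesis using wout q0 by (simp add: mat_id_def zero_power)
  qed
  finally show "act m (frobM (q^n) A) [:- (theta^(q^n)), 1:] w c = rowmul m w (frobM (q^n) Nm) c"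
    by simp
qed

lemma act_powK:
  assumes wout: "\<And>c. c \<ge> m \<Longrightarrow> w c = 0"
  shows "act m (frobM (q^n) A) ([:- (theta^(q^n)), 1:] ^ K) w = rp m (frobM (q^n) Nm) K w"
proof (induct K)
  case 0 then show ?case by (simp add: act_one)
next
  case (Suc K)
  have vo: "\<And>c. c \<ge> m \<Longrightarrow> rp m (frobM (q^n) Nm) K w c = 0"
    by (rule rp_vout[OF frobM_out[OF Nm_out] wout]) auto
  have "act m (frobM (q^n) A) ([:- (theta^(q^n)), 1:] ^ Suc K) w
      = act m (frobM (q^n) A) [:- (theta^(q^n)), 1:] (rp m (frobM (q^n) Nm) K w)"
    by (simp only: power_Suc act_mult Suc)
  also have "\<dots> = rowmul m (rp m (frobM (q^n) Nm) K w) (frobM (q^n) Nm)"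
    by (rule act_lin[OF vo])
  also have "\<dots> = rp m (frobM (q^n) Nm) (Suc K) w" by (simp add: rp_rowmul)
  finally show ?case .
qed

lemma nil_kill:
  obtains K where "\<And>w n c. (\<And>c. c \<ge> m \<Longrightarrow> w c = 0) \<Longrightarrow> rp m (frobM (q^n) Nm) K w c = 0"
proof -
  obtain K where K: "mat_eq m (mat_pow m Nm K) (\<lambda>_ _. 0)" using nil unfolding mat_nilpotent_def by blast
  have "rp m (frobM (q^n) Nm) K w c = 0" if wout: "\<And>c. c \<ge> m \<Longrightarrow> w c = 0" for w n c
  proof -
    have "rp m (frobM (q^n) Nm) K w c = (\<Sum>l<m. w l * (mat_pow m Nm K l c)^(q^n))"
      by (rule rp_mat_pow[OF fr Nm_out wout, symmetric])
    also have "\<dots> = 0"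
    proof (cases "c < m")
      case True then show ?thesis using K q0 unfolding mat_eq_def by (simp add: zero_power)
    next
      case False then show ?thesis using q0 by (simp add: mat_pow_out zero_power)
    qed
    finally show ?thesis .
  qed
  then show ?thesis using that by blast
qed

end


context tmod0
begin

lemma torsion:
  assumes f: "f \<in> Hom F m"
  shows "\<exists>a\<in>FT F. a \<noteq> 0 \<and> FT_act q m Phi a f = (\<lambda>n c. 0)"
proof -
  obtain K where K: "\<And>w n c. (\<And>c. c \<ge> m \<Longrightarrow> w c = 0) \<Longrightarrow> rp m (frobM (q^n) Nm) K w c = 0"
    using nil_kill by blast
  obtain N0 where N0: "\<And>n c. n > N0 \<Longrightarrow> f n c = 0" using f unfolding Hom_def by blast
  have fout: "\<And>n c. c \<ge> m \<Longrightarrow> f n c = 0" using f unfolding Hom_def by blast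
  define th where "th = (\<lambda>n. theta ^ (q ^ n))"
  define a where "a = (\<Prod>n\<le>N0. (monom 1 i - [:th n ^ i:]) ^ K)"
  have aFT: "a \<in> FT F" unfolding a_def th_def
    by (intro FT_prod FT_power FT_base Fpow thF)
  have anz: "a \<noteq> 0" unfolding a_def using base_nz[OF i0] by (simp del: diff_eq_eq) blast
  have aXi: "Xi i a" unfolding a_def by (intro Xi_prod Xi_power Xi_base)
  have "FT_act q m Phi a f n c = 0" for n c
  proof -
    have "FT_act q m Phi a f n c = act m (frobM (q^n) A) a (f n) c"
      by (rule FT_act_Xi[OF _ f]) (use aXi in \<open>auto simp: Xi_def\<close>)
    also have "\<dots> = 0"
    proof (cases "n \<le> N0")
      case False
      then have "f n = (\<lambda>c. 0)" using N0 by auto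
      then show ?thesis by (simp add: act_vzero)
    next
      case True
      have "[:- th n, 1:] ^ K dvd (monom 1 i - [:th n ^ i:]) ^ K"
        by (rule dvd_power_same[OF base_dvd])
      also have "(monom 1 i - [:th n ^ i:]) ^ K dvd a"
        unfolding a_def using True by (intro dvd_prodI) auto
      finally obtain r where r: "a = [:- th n, 1:] ^ K * r" by (elim dvdE)
      have vo: "\<And>c. c \<ge> m \<Longrightarrow> act m (frobM (q^n) A) r (f n) c = 0"
        by (rule act_vout[OF frobM_out[OF A_out]]) (auto simp: fout)
      have "act m (frobM (q^n) A) a (f n) c
          = act m (frobM (q^n) A) ([:- th n, 1:] ^ K) (act m (frobM (q^n) A) r (f n)) c"
        by (simp add: r act_mult)
      also have "\<dots> = rp m (frobM (q^n) Nm) K (act m (frobM (q^n) A) r (f n)) c"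
        unfolding th_def by (simp add: act_powK[OF vo])
      also have "\<dots> = 0" by (rule K[OF vo])
      finally show ?thesis .
    qed
    finally show ?thesis .
  qed
  then show ?thesis using aFT anz by blast
qed

end


context tmod
begin

lemma det_F:
  assumes "\<And>r c. r < dim_row M \<Longrightarrow> c < dim_col M \<Longrightarrow> M $$ (r,c) \<in> F"
  shows "det M \<in> F"
proof (cases "dim_row M = dim_col M")
  case False then show ?thesis unfolding det_def using F0 by simp
next
  case True
  have sg: "(of_int (sign p) :: 'a) \<in> F" for p :: "nat \<Rightarrow> nat"
    by (cases p rule: sign_cases) (simp_all add: F1 Fneg)
  have "det M = (\<Sum>p\<in>{p. p permutes {0..<dim_row M}}. of_int (sign p) * (\<Prod>i = 0..<dim_row M. M $$ (i, p i)))"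
    unfolding det_def using True by simp
  also have "\<dots> \<in> F"
  proof (intro Fsum Fmult sg Fprod)
    fix p i assume p: "p \<in> {p. p permutes {0..<dim_row M}}" and i: "i \<in> {0..<dim_row M}"
    then have "p i \<in> {0..<dim_row M}" by (simp add: permutes_in_image)
    then show "M $$ (i, p i) \<in> F" using assms i True by auto
  qed
  finally show ?thesis .
qed

lemma inv_F:
  assumes inv: "mat_invertible m L" and LF: "\<And>r c. L r c \<in> F"
  shows "\<exists>Li. (\<forall>r c. Li r c \<in> F) \<and>
     (\<forall>k c. k < m \<longrightarrow> c < m \<longrightarrow> (\<Sum>l<m. Li k l * L l c) = (if k = c then 1 else 0))"
proof -
  obtain B where B: "mat_eq m (mat_mult m L B) (mat_id m)" using inv unfolding mat_invertible_def by blast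
  define LM where "LM = mat m m (\<lambda>(r,c). L r c)"
  define BM where "BM = mat m m (\<lambda>(r,c). B r c)"
  have cML: "LM \<in> carrier_mat m m" and cMB: "BM \<in> carrier_mat m m" unfolding LM_def BM_def by auto
  have "LM * BM = 1\<^sub>m m"
  proof (rule eq_matI)
    fix r c assume rc: "r < dim_row (1\<^sub>m m)" "c < dim_col (1\<^sub>m m)"
    then have "(LM * BM) $$ (r, c) = mat_mult m L B r c"
      unfolding LM_def BM_def mat_mult_def by (simp add: scalar_prod_def atLeast0LessThan)
    also have "\<dots> = mat_id m r c" using B rc unfolding mat_eq_def by simp
    finally show "(LM * BM) $$ (r, c) = 1\<^sub>m m $$ (r, c)" using rc by (simp add: mat_id_def)
  qed (auto simp: LM_def BM_def)
  then have "det LM * det BM = 1" using det_mult[OF cML cMB] by simp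
  then have dnz: "det LM \<noteq> 0" by auto
  have dF: "det LM \<in> F" by (rule det_F) (simp add: LM_def LF)
  define Li where "Li = (\<lambda>r c. if r < m \<and> c < m then adj_mat LM $$ (r,c) / det LM else 0)"
  have adjF: "adj_mat LM $$ (r,c) \<in> F" if "r < m" "c < m" for r c
  proof -
    have "adj_mat LM $$ (r,c) = cofactor LM c r" using that cML unfolding adj_mat_def by auto
    also have "\<dots> \<in> F" unfolding cofactor_def
      by (intro Fmult Fpow F1 Fneg det_F) (use cML in \<open>auto simp: mat_delete_def LM_def LF\<close>)
    finally show ?thesis .
  qed
  have LiF: "\<forall>r c. Li r c \<in> F" unfolding Li_def using adjF dF F0 by (auto intro: Fdiv)
  have "(\<Sum>l<m. Li k l * L l c) = (if k = c then 1 else 0)" if kc: "k < m" "c < m" for k c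
  proof -
    have "(adj_mat LM * LM) $$ (k,c) = (det LM \<cdot>\<^sub>m 1\<^sub>m m) $$ (k,c)" using adj_mat(3)[OF cML] by simp
    moreover have "(adj_mat LM * LM) $$ (k,c) = (\<Sum>l<m. adj_mat LM $$ (k,l) * L l c)"
      using kc cML adj_mat(1)[OF cML] unfolding LM_def
      by (simp add: scalar_prod_def atLeast0LessThan)
    ultimately have "(\<Sum>l<m. adj_mat LM $$ (k,l) * L l c) = (if k = c then det LM else 0)"
      using kc by simp
    then have "(\<Sum>l<m. adj_mat LM $$ (k,l) * L l c) / det LM = (if k = c then 1 else 0)"
      using dnz by simp
    moreover have "(\<Sum>l<m. Li k l * L l c) = (\<Sum>l<m. adj_mat LM $$ (k,l) * L l c) / det LM"
      unfolding Li_def using kc by (simp add: sum_divide_distrib)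
    ultimately show ?thesis by simp
  qed
  then show ?thesis using LiF by blast
qed

end


lemma inj_ee: "inj (ee :: nat \<times> nat \<Rightarrow> nat \<Rightarrow> nat \<Rightarrow> 'a::field)"
proof (rule injI)
  fix p p' :: "nat \<times> nat"
  assume "(ee p :: nat \<Rightarrow> nat \<Rightarrow> 'a) = ee p'"
  then have "(ee p :: nat \<Rightarrow> nat \<Rightarrow> 'a) (fst p) (snd p) = ee p' (fst p) (snd p)" by simp
  then have "(1::'a) = (if fst p = fst p' \<and> snd p = snd p' then 1 else 0)" by (simp add: ee_def)
  then show "p = p'" by (cases p, cases p') (auto split: if_splits)
qed

theorem theorem9:
  fixes q m :: nat and theta :: "'a::field" and F :: "'a set"
    and Phi_T :: "nat \<Rightarrow> nat \<Rightarrow> nat \<Rightarrow> 'a"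
  assumes "good_setting q theta"
    and "intermediate_field q theta F"
    and "is_T_module q theta F m Phi_T"
    and "\<exists>i>0. mat_invertible m (tlead m (tpow q m Phi_T i))"
  shows "abelian q F m Phi_T"
proof -
  have fr: "frob_ok TYPE('a) q" using assms(1) unfolding good_setting_def frob_ok_def by blast
  have q0: "q > 0" by (rule frob_pos[OF fr])
  have sf: "is_subfield F" and kF: "kfield q theta \<subseteq> F"
    using assms(2) unfolding intermediate_field_def by auto
  have "theta \<in> kfield q theta"
  proof -
    have c1: "coeff [:0, 1:] k \<in> Fq q" for k :: nat
      using q0 by (cases k) (auto simp: Fq_def coeff_pCons zero_power split: nat.splits)
    have c2: "coeff (1::'a poly) k \<in> Fq q" for k :: nat
      using q0 by (auto simp: Fq_def coeff_1)
    have "theta = poly [:0, 1:] theta / poly 1 theta" by simp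
    then show ?thesis unfolding kfield_def using c1 c2 by fastforce
  qed
  then have thF: "theta \<in> F" using kF by blast
  obtain d where m0: "m > 0" and PhiF: "\<And>n r c. Phi_T n r c \<in> F"
    and Phi_out: "\<And>n r c. r \<ge> m \<or> c \<ge> m \<Longrightarrow> Phi_T n r c = 0"
    and Phi_fin: "\<And>n r c. n > d \<Longrightarrow> Phi_T n r c = 0"
    and nil: "mat_nilpotent m (\<lambda>r c. Phi_T 0 r c - theta * mat_id m r c)"
    using assms(3) unfolding is_T_module_def by (metis not_le)
  interpret tmod q m d theta F Phi_T
    by unfold_locales (use fr m0 sf thF PhiF Phi_out Phi_fin nil in auto)
  obtain i where i0: "i > 0" and inv: "mat_invertible m (tlead m (T i))" using assms(4) by blast
  define D where "D = tdeg m (T i)"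
  have Pfin: "T i n r c = 0" if n: "n > D" for n r c
  proof (cases "r \<ge> m \<or> c \<ge> m")
    case True then show ?thesis by (rule tpow_out)
  next
    case False
    show ?thesis
    proof (rule ccontr)
      assume "T i n r c \<noteq> 0"
      then have Pn: "\<exists>r<m. \<exists>c<m. T i n r c \<noteq> 0" using False not_le by blast
      have bnd: "\<And>y. (\<exists>r<m. \<exists>c<m. T i y r c \<noteq> 0) \<Longrightarrow> y \<le> i * d"
        using tpow_fin by (meson not_le)
      have "n \<le> D" unfolding D_def tdeg_def
        by (rule Greatest_le_nat[where P="\<lambda>n. \<exists>r<m. \<exists>c<m. T i n r c \<noteq> 0", OF Pn bnd])
      then show False using n by simp
    qed
  qed
  show ?thesis
  proof (cases "D = 0")
    case True
    interpret tmod0 q m d theta F Phi_T i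
      by unfold_locales (use i0 Pfin True in auto)
    show ?thesis unfolding abelian_def finite_rank_def
    proof (intro exI[of _ "{}"] conjI ballI)
      fix f assume "f \<in> Hom F m"
      then obtain a where "a \<in> FT F" "a \<noteq> 0" "FT_act q m Phi_T a f = (\<lambda>n c. 0)"
        using torsion by blast
      then show "\<exists>a\<in>FT F. a \<noteq> 0 \<and> (\<exists>g. (\<forall>s\<in>{}. g s \<in> FT F) \<and>
          FT_act q m Phi_T a f = (\<lambda>n c. \<Sum>s\<in>{}. FT_act q m Phi_T (g s) s n c))" by auto
    qed auto
  next
    case False
    have LF: "\<And>r c. tlead m (T i) r c \<in> F" unfolding tlead_def by (rule tpow_F)
    obtain Li where LiF: "\<forall>r c. Li r c \<in> F"
      and Linv: "\<forall>k c. k < m \<longrightarrow> c < m \<longrightarrow> (\<Sum>l<m. Li k l * tlead m (T i) l c) = (if k = c then 1 else 0)"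
      using inv_F[OF inv LF] by blast
    interpret tmodD q m d theta F Phi_T i D Li
      by unfold_locales (use i0 False Pfin LiF Linv in \<open>auto simp: tlead_def D_def\<close>)
    define S where "S = (ee :: nat \<times> nat \<Rightarrow> nat \<Rightarrow> nat \<Rightarrow> 'a) ` Sidx"
    have injS: "inj_on (ee :: nat \<times> nat \<Rightarrow> nat \<Rightarrow> nat \<Rightarrow> 'a) Sidx" using inj_ee by (rule inj_on_subset) simp
    have SH: "S \<subseteq> Hom F m"
    proof
      fix s assume "s \<in> S"
      then obtain p where p: "p \<in> Sidx" "s = ee p" unfolding S_def by blast
      show "s \<in> Hom F m" unfolding Hom_def p(2) ee_def
        using p(1) F0 F1 by (auto intro!: exI[of _ "fst p"])
    qed
    show ?thesis unfolding abelian_def finite_rank_def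
    proof (intro exI[of _ S] conjI ballI)
      show "finite S" unfolding S_def by simp
      show "S \<subseteq> Hom F m" by (rule SH)
    next
      fix f assume f: "f \<in> Hom F m"
      obtain g where g: "\<forall>p\<in>Sidx. g p \<in> FT F"
        "f = (\<lambda>n c. \<Sum>p\<in>Sidx. FT_act q m Phi_T (g p) (ee p) n c)"
        using rep_all[OF f] unfolding rep_def by blast
      define g' where "g' = (\<lambda>s. g (the_inv_into Sidx (ee :: nat \<times> nat \<Rightarrow> nat \<Rightarrow> nat \<Rightarrow> 'a) s))"
      have g'p: "g' (ee p) = g p" if "p \<in> Sidx" for p
        unfolding g'_def using the_inv_into_f_f[OF injS that] by simp
      have "FT_act q m Phi_T 1 f = f" by (rule FT_act_one) (use f in \<open>auto simp: Hom_def\<close>)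
      also have "f = (\<lambda>n c. \<Sum>s\<in>S. FT_act q m Phi_T (g' s) s n c)"
        unfolding S_def g(2) by (intro ext) (simp add: sum.reindex[OF injS] g'p)
      finally have "FT_act q m Phi_T 1 f = (\<lambda>n c. \<Sum>s\<in>S. FT_act q m Phi_T (g' s) s n c)" .
      moreover have "\<forall>s\<in>S. g' s \<in> FT F"
      proof
        fix s assume "s \<in> S"
        then obtain p where p: "p \<in> Sidx" "s = ee p" unfolding S_def by blast
        have "g p \<in> FT F" using g(1) p(1) by blast
        then show "g' s \<in> FT F" using p(2) g'p[OF p(1)] by simp
      qed
      moreover have "(1::'a poly) \<noteq> 0" by simp
      ultimately show "\<exists>a\<in>FT F. a \<noteq> 0 \<and> (\<exists>g. (\<forall>s\<in>S. g s \<in> FT F) \<and>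
          FT_act q m Phi_T a f = (\<lambda>n c. \<Sum>s\<in>S. FT_act q m Phi_T (g s) s n c))"
        using FT_one by (intro bexI[of _ 1] conjI exI[of _ g']) auto
    qed
  qed
qed

end
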